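(* Let $G$ be a group generated by a finite set $S$. Assume that every subset of $S$ with (at most) $4$ elements generates a subgroup of exponent $3$. Then $G$ has exponent $3$. *)

theory Defs
  imports "HOL-Algebra.Algebra"
begin

definition exponent3 :: "('a, 'b) monoid_scheme \<Rightarrow> 'a set \<Rightarrow> bool" where
  "exponent3 G H \<longleftrightarrow> (\<forall>h\<in>H. h [^]\<^bsub>G\<^esub> (3::nat) = \<one>\<^bsub>G\<^esub>)"

end

theory Submission
  imports Defs
begin


definition cm :: "('a, 'b) monoid_scheme \<Rightarrow> 'a \<Rightarrow> 'a \<Rightarrow> 'a" where
  "cm G a b = inv\<^bsub>G\<^esub> a \<otimes>\<^bsub>G\<^esub> inv\<^bsub>G\<^esub> b \<otimes>\<^bsub>G\<^esub> a \<otimes>\<^bsub>G\<^esub> b"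

definition cj :: "('a, 'b) monoid_scheme \<Rightarrow> 'a \<Rightarrow> 'a \<Rightarrow> 'a" where
  "cj G x w = inv\<^bsub>G\<^esub> w \<otimes>\<^bsub>G\<^esub> x \<otimes>\<^bsub>G\<^esub> w"

locale exp3grp = group G for G (structure) +
  assumes cube: "h \<in> carrier G \<Longrightarrow> h [^] (3::nat) = \<one>"
begin

lemma cube3: "a \<in> carrier G \<Longrightarrow> a \<otimes> (a \<otimes> a) = \<one>"
  using cube[of a] by (simp add: numeral_3_eq_3 m_assoc)

lemma inv_sq: "a \<in> carrier G \<Longrightarrow> a \<otimes> a = inv a"
  by (metis cube3 inv_equality m_closed m_assoc)

lemma w1: "a \<in> carrier G \<Longrightarrow> r \<in> carrier G \<Longrightarrow> a \<otimes> (inv a \<otimes> r) = r"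
  by (simp add: m_assoc[symmetric])
lemma w2: "a \<in> carrier G \<Longrightarrow> r \<in> carrier G \<Longrightarrow> inv a \<otimes> (a \<otimes> r) = r"
  by (simp add: m_assoc[symmetric])
lemma w3: "a \<in> carrier G \<Longrightarrow> r \<in> carrier G \<Longrightarrow> a \<otimes> (a \<otimes> r) = inv a \<otimes> r"
  by (simp add: m_assoc[symmetric] inv_sq)
lemma w4: "a \<in> carrier G \<Longrightarrow> inv a \<otimes> inv a = a"
  by (metis inv_closed inv_inv inv_sq)
lemma w5: "a \<in> carrier G \<Longrightarrow> r \<in> carrier G \<Longrightarrow> inv a \<otimes> (inv a \<otimes> r) = a \<otimes> r"
  by (simp add: m_assoc[symmetric] w4)

lemmas wsimps = m_assoc w1 w2 w3 w4 w5 inv_sq inv_mult_group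

lemma aba: "a \<in> carrier G \<Longrightarrow> b \<in> carrier G \<Longrightarrow> a \<otimes> b \<otimes> a = inv b \<otimes> inv a \<otimes> inv b"
proof -
  assume a: "a \<in> carrier G" and b: "b \<in> carrier G"
  have "(a \<otimes> b) \<otimes> ((a \<otimes> b) \<otimes> (a \<otimes> b)) = \<one>" using cube3 a b by simp
  hence "a \<otimes> b \<otimes> a \<otimes> (b \<otimes> (a \<otimes> b)) = \<one>" using a b by (simp add: m_assoc)
  hence "a \<otimes> b \<otimes> a = inv (b \<otimes> (a \<otimes> b))" using a b
    by (metis inv_equality inv_comm m_closed)
  thus ?thesis using a b by (simp add: inv_mult_group m_assoc)
qed

lemma burnside: "x \<in> carrier G \<Longrightarrow> y \<in> carrier G \<Longrightarrow>
   x \<otimes> (inv y \<otimes> x \<otimes> y) = (inv y \<otimes> x \<otimes> y) \<otimes> x"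
proof -
  assume x: "x \<in> carrier G" and y: "y \<in> carrier G"
  have "x \<otimes> (inv y \<otimes> x \<otimes> y) = (x \<otimes> inv y \<otimes> x) \<otimes> y" using x y by (simp add: m_assoc)
  also have "\<dots> = (y \<otimes> inv x \<otimes> y) \<otimes> y" using aba[of x "inv y"] x y by simp
  also have "\<dots> = y \<otimes> inv x \<otimes> inv y" using x y by (simp add: m_assoc inv_sq)
  finally have L: "x \<otimes> (inv y \<otimes> x \<otimes> y) = y \<otimes> inv x \<otimes> inv y" .
  have "(inv y \<otimes> x \<otimes> y) \<otimes> x = inv y \<otimes> (x \<otimes> y \<otimes> x)" using x y by (simp add: m_assoc)
  also have "\<dots> = inv y \<otimes> (inv y \<otimes> inv x \<otimes> inv y)" using aba[of x y] x y by simp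
  also have "\<dots> = y \<otimes> inv x \<otimes> inv y" using x y by (simp add: m_assoc w5)
  finally show ?thesis using L by simp
qed

lemma cj_closed[simp]: "x \<in> carrier G \<Longrightarrow> g \<in> carrier G \<Longrightarrow> cj G x g \<in> carrier G"
  by (simp add: cj_def)

lemma cj_comm: "x \<in> carrier G \<Longrightarrow> g \<in> carrier G \<Longrightarrow> h \<in> carrier G \<Longrightarrow>
   cj G x g \<otimes> cj G x h = cj G x h \<otimes> cj G x g"
proof -
  assume x: "x \<in> carrier G" and g: "g \<in> carrier G" and h: "h \<in> carrier G"
  define k where "k = h \<otimes> inv g"
  have k: "k \<in> carrier G" using g h k_def by simp
  have hk: "h = k \<otimes> g" using g h k_def by (simp add: m_assoc)
  have B: "x \<otimes> cj G x k = cj G x k \<otimes> x" using burnside[OF x k] by (simp add: cj_def)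
  have "cj G x g \<otimes> cj G x h = inv g \<otimes> (x \<otimes> cj G x k) \<otimes> g"
    using x g k by (simp add: hk cj_def m_assoc inv_mult_group w1 w2)
  also have "\<dots> = inv g \<otimes> (cj G x k \<otimes> x) \<otimes> g" using B by simp
  also have "\<dots> = cj G x h \<otimes> cj G x g"
    using x g k by (simp add: hk cj_def m_assoc inv_mult_group w1 w2)
  finally show ?thesis .
qed

lemma cj_lcomm: "x \<in> carrier G \<Longrightarrow> g \<in> carrier G \<Longrightarrow> h \<in> carrier G \<Longrightarrow> r \<in> carrier G \<Longrightarrow>
   cj G x g \<otimes> (cj G x h \<otimes> r) = cj G x h \<otimes> (cj G x g \<otimes> r)"
  by (simp add: m_assoc[symmetric] cj_comm)

lemma cj_c3: "x \<in> carrier G \<Longrightarrow> g \<in> carrier G \<Longrightarrow> r \<in> carrier G \<Longrightarrow>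
   cj G x g \<otimes> (cj G x g \<otimes> (cj G x g \<otimes> r)) = r"
  by (simp add: m_assoc[symmetric] ) (simp add: m_assoc cube3)

lemma cj_c3': "x \<in> carrier G \<Longrightarrow> g \<in> carrier G \<Longrightarrow>
   cj G x g \<otimes> (cj G x g \<otimes> cj G x g) = \<one>"
  by (simp add: cube3)

lemma cj_inv: "x \<in> carrier G \<Longrightarrow> g \<in> carrier G \<Longrightarrow> inv (cj G x g) = cj G x g \<otimes> cj G x g"
  by (simp add: inv_sq)

lemma cj_rel: "x \<in> carrier G \<Longrightarrow> g \<in> carrier G \<Longrightarrow> h \<in> carrier G \<Longrightarrow>
   cj G x h \<otimes> cj G x (h \<otimes> g) \<otimes> cj G x (h \<otimes> g \<otimes> g) = \<one>"
proof -
  assume x: "x \<in> carrier G" and g: "g \<in> carrier G" and h: "h \<in> carrier G"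
  define u where "u = cj G x h"
  have u: "u \<in> carrier G" using u_def x h by simp
  have "cj G x h \<otimes> cj G x (h \<otimes> g) \<otimes> cj G x (h \<otimes> g \<otimes> g)
      = u \<otimes> (inv g \<otimes> u \<otimes> g) \<otimes> (inv g \<otimes> inv g \<otimes> u \<otimes> g \<otimes> g)"
    using x g h by (simp add: u_def cj_def m_assoc inv_mult_group)
  also have "\<dots> = (u \<otimes> inv g) \<otimes> ((u \<otimes> inv g) \<otimes> (u \<otimes> (g \<otimes> g)))"
    using u g by (simp add: m_assoc w1 w2)
  also have "\<dots> = (u \<otimes> inv g) \<otimes> ((u \<otimes> inv g) \<otimes> (u \<otimes> inv g))"
    using g by (simp add: inv_sq)
  also have "\<dots> = \<one>" using u g by (simp add: cube3)
  finally show ?thesis .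
qed

end

context exp3grp begin

lemma class3: assumes xyzw: "x \<in> carrier G" "y \<in> carrier G" "z \<in> carrier G" "w \<in> carrier G"
  shows "cm G (cm G (cm G x y) z) w = \<one>"
proof -
  define Q where "Q = inv (cj G x (y \<otimes> z)) \<otimes> (cj G x z \<otimes> (inv (cj G x \<one>) \<otimes> (cj G x y \<otimes> (inv (cj G x (y \<otimes> w)) \<otimes> (cj G x w \<otimes> (inv (cj G x (z \<otimes> w)) \<otimes> cj G x (y \<otimes> (z \<otimes> w))))))))"
  have QE: "cm G (cm G (cm G x y) z) w = Q"
    unfolding Q_def cm_def cj_def using xyzw by (simp add: wsimps)
  have r0: "cj G x (y \<otimes> (w)) \<otimes> (cj G x (\<one>) \<otimes> cj G x (inv w \<otimes> (inv y))) = \<one>"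
    using cj_rel[of x "inv w \<otimes> (inv y)" "y \<otimes> (w)"] xyzw by (simp add: wsimps)
  have r1: "cj G x (inv y) \<otimes> (cj G x (w \<otimes> (inv y)) \<otimes> cj G x (inv w \<otimes> (inv y))) = \<one>"
    using cj_rel[of x "y \<otimes> (w \<otimes> (inv y))" "inv y"] xyzw by (simp add: wsimps)
  have r2: "cj G x (z \<otimes> (w)) \<otimes> (cj G x (\<one>) \<otimes> cj G x (inv w \<otimes> (inv z))) = \<one>"
    using cj_rel[of x "inv w \<otimes> (inv z)" "z \<otimes> (w)"] xyzw by (simp add: wsimps)
  have r3: "cj G x (inv z) \<otimes> (cj G x (w \<otimes> (inv z)) \<otimes> cj G x (inv w \<otimes> (inv z))) = \<one>"
    using cj_rel[of x "z \<otimes> (w \<otimes> (inv z))" "inv z"] xyzw by (simp add: wsimps)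
  have r4: "cj G x (\<one>) \<otimes> (cj G x (z) \<otimes> cj G x (inv z)) = \<one>"
    using cj_rel[of x "z" "\<one>"] xyzw by (simp add: wsimps)
  have r5: "cj G x (w) \<otimes> (cj G x (w \<otimes> (z)) \<otimes> cj G x (w \<otimes> (inv z))) = \<one>"
    using cj_rel[of x "z" "w"] xyzw by (simp add: wsimps)
  have r6: "cj G x (z \<otimes> (y \<otimes> (inv w))) \<otimes> (cj G x (\<one>) \<otimes> cj G x (w \<otimes> (inv y \<otimes> (inv z)))) = \<one>"
    using cj_rel[of x "w \<otimes> (inv y \<otimes> (inv z))" "z \<otimes> (y \<otimes> (inv w))"] xyzw by (simp add: wsimps)
  have r7: "cj G x (z \<otimes> (y)) \<otimes> (cj G x (z \<otimes> (y \<otimes> (w))) \<otimes> cj G x (z \<otimes> (y \<otimes> (inv w)))) = \<one>"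
    using cj_rel[of x "w" "z \<otimes> (y)"] xyzw by (simp add: wsimps)
  have r8: "cj G x (y \<otimes> (z)) \<otimes> (cj G x (\<one>) \<otimes> cj G x (inv z \<otimes> (inv y))) = \<one>"
    using cj_rel[of x "inv z \<otimes> (inv y)" "y \<otimes> (z)"] xyzw by (simp add: wsimps)
  have r9: "cj G x (inv y) \<otimes> (cj G x (z \<otimes> (inv y)) \<otimes> cj G x (inv z \<otimes> (inv y))) = \<one>"
    using cj_rel[of x "y \<otimes> (z \<otimes> (inv y))" "inv y"] xyzw by (simp add: wsimps)
  have r10: "cj G x (z) \<otimes> (cj G x (z \<otimes> (y)) \<otimes> cj G x (z \<otimes> (inv y))) = \<one>"
    using cj_rel[of x "y" "z"] xyzw by (simp add: wsimps)
  have r11: "cj G x (w \<otimes> (inv y)) \<otimes> (cj G x (w \<otimes> (inv y \<otimes> (z))) \<otimes> cj G x (w \<otimes> (inv y \<otimes> (inv z)))) = \<one>"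
    using cj_rel[of x "z" "w \<otimes> (inv y)"] xyzw by (simp add: wsimps)
  have r12: "cj G x (z \<otimes> (y \<otimes> (w))) \<otimes> (cj G x (z) \<otimes> cj G x (z \<otimes> (inv w \<otimes> (inv y)))) = \<one>"
    using cj_rel[of x "inv w \<otimes> (inv y)" "z \<otimes> (y \<otimes> (w))"] xyzw by (simp add: wsimps)
  have r13: "cj G x (y \<otimes> (w \<otimes> (inv z))) \<otimes> (cj G x (\<one>) \<otimes> cj G x (z \<otimes> (inv w \<otimes> (inv y)))) = \<one>"
    using cj_rel[of x "z \<otimes> (inv w \<otimes> (inv y))" "y \<otimes> (w \<otimes> (inv z))"] xyzw by (simp add: wsimps)
  have r14: "cj G x (y \<otimes> (z \<otimes> (w))) \<otimes> (cj G x (y) \<otimes> cj G x (y \<otimes> (inv w \<otimes> (inv z)))) = \<one>"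
    using cj_rel[of x "inv w \<otimes> (inv z)" "y \<otimes> (z \<otimes> (w))"] xyzw by (simp add: wsimps)
  have r15: "cj G x (y \<otimes> (inv z)) \<otimes> (cj G x (y \<otimes> (w \<otimes> (inv z))) \<otimes> cj G x (y \<otimes> (inv w \<otimes> (inv z)))) = \<one>"
    using cj_rel[of x "z \<otimes> (w \<otimes> (inv z))" "y \<otimes> (inv z)"] xyzw by (simp add: wsimps)
  have r16: "cj G x (y) \<otimes> (cj G x (y \<otimes> (z)) \<otimes> cj G x (y \<otimes> (inv z))) = \<one>"
    using cj_rel[of x "z" "y"] xyzw by (simp add: wsimps)
  have r17: "cj G x (w \<otimes> (z)) \<otimes> (cj G x (w \<otimes> (y \<otimes> (z))) \<otimes> cj G x (w \<otimes> (inv y \<otimes> (z)))) = \<one>"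
    using cj_rel[of x "inv z \<otimes> (y \<otimes> (z))" "w \<otimes> (z)"] xyzw by (simp add: wsimps)
  have r18: "cj G x (w \<otimes> (y \<otimes> (z))) \<otimes> (cj G x (w) \<otimes> cj G x (w \<otimes> (inv z \<otimes> (inv y)))) = \<one>"
    using cj_rel[of x "inv z \<otimes> (inv y)" "w \<otimes> (y \<otimes> (z))"] xyzw by (simp add: wsimps)
  have r19: "cj G x (y \<otimes> (z \<otimes> (inv w))) \<otimes> (cj G x (\<one>) \<otimes> cj G x (w \<otimes> (inv z \<otimes> (inv y)))) = \<one>"
    using cj_rel[of x "w \<otimes> (inv z \<otimes> (inv y))" "y \<otimes> (z \<otimes> (inv w))"] xyzw by (simp add: wsimps)
  have r20: "cj G x (y \<otimes> (z)) \<otimes> (cj G x (y \<otimes> (z \<otimes> (w))) \<otimes> cj G x (y \<otimes> (z \<otimes> (inv w)))) = \<one>"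
    using cj_rel[of x "w" "y \<otimes> (z)"] xyzw by (simp add: wsimps)
  have RR: "Q = (cj G x (y \<otimes> (w)) \<otimes> (cj G x (\<one>) \<otimes> cj G x (inv w \<otimes> (inv y)))) \<otimes> ((cj G x (y \<otimes> (w)) \<otimes> (cj G x (\<one>) \<otimes> cj G x (inv w \<otimes> (inv y)))) \<otimes> ((cj G x (inv y) \<otimes> (cj G x (w \<otimes> (inv y)) \<otimes> cj G x (inv w \<otimes> (inv y)))) \<otimes> ((cj G x (z \<otimes> (w)) \<otimes> (cj G x (\<one>) \<otimes> cj G x (inv w \<otimes> (inv z)))) \<otimes> ((cj G x (z \<otimes> (w)) \<otimes> (cj G x (\<one>) \<otimes> cj G x (inv w \<otimes> (inv z)))) \<otimes> ((cj G x (inv z) \<otimes> (cj G x (w \<otimes> (inv z)) \<otimes> cj G x (inv w \<otimes> (inv z)))) \<otimes> ((cj G x (\<one>) \<otimes> (cj G x (z) \<otimes> cj G x (inv z))) \<otimes> ((cj G x (\<one>) \<otimes> (cj G x (z) \<otimes> cj G x (inv z))) \<otimes> ((cj G x (w) \<otimes> (cj G x (w \<otimes> (z)) \<otimes> cj G x (w \<otimes> (inv z)))) \<otimes> ((cj G x (w) \<otimes> (cj G x (w \<otimes> (z)) \<otimes> cj G x (w \<otimes> (inv z)))) \<otimes> ((cj G x (z \<otimes> (y \<otimes> (inv w))) \<otimes> (cj G x (\<one>) \<otimes> cj G x (w \<otimes> (inv y \<otimes> (inv z))))) \<otimes> ((cj G x (z \<otimes> (y)) \<otimes> (cj G x (z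 \<otimes> (y \<otimes> (w))) \<otimes> cj G x (z \<otimes> (y \<otimes> (inv w))))) \<otimes> ((cj G x (z \<otimes> (y)) \<otimes> (cj G x (z \<otimes> (y \<otimes> (w))) \<otimes> cj G x (z \<otimes> (y \<otimes> (inv w))))) \<otimes> ((cj G x (y \<otimes> (z)) \<otimes> (cj G x (\<one>) \<otimes> cj G x (inv z \<otimes> (inv y)))) \<otimes> ((cj G x (inv y) \<otimes> (cj G x (z \<otimes> (inv y)) \<otimes> cj G x (inv z \<otimes> (inv y)))) \<otimes> ((cj G x (inv y) \<otimes> (cj G x (z \<otimes> (inv y)) \<otimes> cj G x (inv z \<otimes> (inv y)))) \<otimes> ((cj G x (z) \<otimes> (cj G x (z \<otimes> (y)) \<otimes> cj G x (z \<otimes> (inv y)))) \<otimes> ((cj G x (w \<otimes> (inv y)) \<otimes> (cj G x (w \<otimes> (inv y \<otimes> (z))) \<otimes> cj G x (w \<otimes> (inv y \<otimes> (inv z))))) \<otimes> ((cj G x (w \<otimes> (inv y)) \<otimes> (cj G x (w \<otimes> (inv y \<otimes> (z))) \<otimes> cj G x (w \<otimes> (inv y \<otimes> (inv z))))) \<otimes> ((cj G x (z \<otimes> (y \<otimes> (w))) \<otimes> (cj G x (z) \<otimes> cj G x (z \<otimes> (inv w \<otimes> (inv y))))) \<otimes> ((cj G x (y \<otimes> (w \<otimes> (inv z))) \<otimes> (cj G x (\<one>) \<otimes> cj G x (z \<otimes> (inv w \<otimes> (inv y))))) \<otimes> ((cj G x (y \<otimes> (w \<otimes> (inv z))) \<otimes>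 (cj G x (\<one>) \<otimes> cj G x (z \<otimes> (inv w \<otimes> (inv y))))) \<otimes> ((cj G x (y \<otimes> (z \<otimes> (w))) \<otimes> (cj G x (y) \<otimes> cj G x (y \<otimes> (inv w \<otimes> (inv z))))) \<otimes> ((cj G x (y \<otimes> (z \<otimes> (w))) \<otimes> (cj G x (y) \<otimes> cj G x (y \<otimes> (inv w \<otimes> (inv z))))) \<otimes> ((cj G x (y \<otimes> (inv z)) \<otimes> (cj G x (y \<otimes> (w \<otimes> (inv z))) \<otimes> cj G x (y \<otimes> (inv w \<otimes> (inv z))))) \<otimes> ((cj G x (y) \<otimes> (cj G x (y \<otimes> (z)) \<otimes> cj G x (y \<otimes> (inv z)))) \<otimes> ((cj G x (y) \<otimes> (cj G x (y \<otimes> (z)) \<otimes> cj G x (y \<otimes> (inv z)))) \<otimes> ((cj G x (w \<otimes> (z)) \<otimes> (cj G x (w \<otimes> (y \<otimes> (z))) \<otimes> cj G x (w \<otimes> (inv y \<otimes> (z))))) \<otimes> ((cj G x (w \<otimes> (y \<otimes> (z))) \<otimes> (cj G x (w) \<otimes> cj G x (w \<otimes> (inv z \<otimes> (inv y))))) \<otimes> ((cj G x (w \<otimes> (y \<otimes> (z))) \<otimes> (cj G x (w) \<otimes> cj G x (w \<otimes> (inv z \<otimes> (inv y))))) \<otimes> ((cj G x (y \<otimes> (z \<otimes> (inv w))) \<otimes> (cj G x (\<one>) \<otimes> cj G x (w \<otimes> (inv z \<otimes> (inv y))))) \<otimes> ((cj G x (y \<otimes> (z)) \<otimes> (cj G x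 (y \<otimes> (z \<otimes> (w))) \<otimes> cj G x (y \<otimes> (z \<otimes> (inv w))))) \<otimes> ((cj G x (y \<otimes> (z)) \<otimes> (cj G x (y \<otimes> (z \<otimes> (w))) \<otimes> cj G x (y \<otimes> (z \<otimes> (inv w)))))))))))))))))))))))))))))))))))))"
    by (simp only: Q_def m_assoc cj_comm cj_lcomm cj_c3 cj_c3' cj_inv inv_mult_group cj_closed r_one l_one m_closed inv_closed one_closed xyzw)
  also have "\<dots> = \<one>" by (simp add: r0 r1 r2 r3 r4 r5 r6 r7 r8 r9 r10 r11 r12 r13 r14 r15 r16 r17 r18 r19 r20 xyzw)
  finally show ?thesis using QE by simp
qed

end

context exp3grp begin
lemma engel2: assumes xy: "x \<in> carrier G" "y \<in> carrier G"
  shows "cm G (cm G x y) y = \<one>"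
proof -
  have QE: "cm G (cm G x y) y = inv (cj G x y) \<otimes> (cj G x \<one> \<otimes> (inv (cj G x y) \<otimes> cj G x (inv y)))"
    unfolding cm_def cj_def using xy by (simp add: wsimps)
  have R: "cj G x \<one> \<otimes> (cj G x y \<otimes> cj G x (inv y)) = \<one>"
    using cj_rel[of x y \<one>] xy by (simp add: wsimps)
  have "inv (cj G x y) \<otimes> (cj G x \<one> \<otimes> (inv (cj G x y) \<otimes> cj G x (inv y))) = cj G x \<one> \<otimes> (cj G x y \<otimes> cj G x (inv y))"
    by (simp only: m_assoc cj_comm cj_lcomm cj_c3 cj_c3' cj_inv inv_mult_group cj_closed r_one l_one m_closed inv_closed one_closed xy)
  thus ?thesis using QE R by simp
qed
end

inductive_set wordset :: "('a, 'b) monoid_scheme \<Rightarrow> 'a set \<Rightarrow> 'a set" for G S where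
  wone: "\<one>\<^bsub>G\<^esub> \<in> wordset G S"
| wstep: "h \<in> wordset G S \<Longrightarrow> s \<in> S \<Longrightarrow> h \<otimes>\<^bsub>G\<^esub> s \<in> wordset G S"

context group begin

lemma gw1: "a \<in> carrier G \<Longrightarrow> r \<in> carrier G \<Longrightarrow> a \<otimes> (inv a \<otimes> r) = r"
  by (simp add: m_assoc[symmetric])
lemma gw2: "a \<in> carrier G \<Longrightarrow> r \<in> carrier G \<Longrightarrow> inv a \<otimes> (a \<otimes> r) = r"
  by (simp add: m_assoc[symmetric])
lemmas gsimps = m_assoc gw1 gw2 inv_mult_group

lemma cm_closed[simp]: "a \<in> carrier G \<Longrightarrow> b \<in> carrier G \<Longrightarrow> cm G a b \<in> carrier G"
  by (simp add: cm_def)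

lemma cm_one_iff: "a \<in> carrier G \<Longrightarrow> b \<in> carrier G \<Longrightarrow> cm G a b = \<one> \<longleftrightarrow> a \<otimes> b = b \<otimes> a"
proof -
  assume a: "a \<in> carrier G" and b: "b \<in> carrier G"
  have "cm G a b = inv (b \<otimes> a) \<otimes> (a \<otimes> b)" using a b by (simp add: cm_def inv_mult_group m_assoc)
  thus ?thesis using a b
    by (metis inv_closed inv_comm inv_equality inv_inv m_closed r_inv)
qed

lemma cm_right: "w \<in> carrier G \<Longrightarrow> h \<in> carrier G \<Longrightarrow> s \<in> carrier G \<Longrightarrow>
  cm G w (h \<otimes> s) = cm G w s \<otimes> (inv s \<otimes> cm G w h \<otimes> s)"
  by (simp add: cm_def gsimps)

lemma cm_left: "h \<in> carrier G \<Longrightarrow> s \<in> carrier G \<Longrightarrow> y \<in> carrier G \<Longrightarrow>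
  cm G (h \<otimes> s) y = (inv s \<otimes> cm G h y \<otimes> s) \<otimes> cm G s y"
  by (simp add: cm_def gsimps)

lemma conj_cm: "u \<in> carrier G \<Longrightarrow> s \<in> carrier G \<Longrightarrow> inv s \<otimes> u \<otimes> s = u \<otimes> cm G u s"
  by (simp add: cm_def gsimps)

lemma cm_swap: "a \<in> carrier G \<Longrightarrow> b \<in> carrier G \<Longrightarrow> cm G a b = inv (cm G b a)"
  by (simp add: cm_def gsimps)

lemma cm_one_left[simp]: "b \<in> carrier G \<Longrightarrow> cm G \<one> b = \<one>"
  by (simp add: cm_def)
lemma cm_one_right[simp]: "b \<in> carrier G \<Longrightarrow> cm G b \<one> = \<one>"
  by (simp add: cm_def)

end


definition ctr :: "('a, 'b) monoid_scheme \<Rightarrow> 'a \<Rightarrow> bool" where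
  "ctr G u \<longleftrightarrow> u \<in> carrier G \<and> (\<forall>g\<in>carrier G. u \<otimes>\<^bsub>G\<^esub> g = g \<otimes>\<^bsub>G\<^esub> u)
     \<and> u \<otimes>\<^bsub>G\<^esub> (u \<otimes>\<^bsub>G\<^esub> u) = \<one>\<^bsub>G\<^esub>"

definition isD :: "('a, 'b) monoid_scheme \<Rightarrow> 'a \<Rightarrow> bool" where
  "isD G u \<longleftrightarrow> u \<in> carrier G \<and> (\<forall>g\<in>carrier G. ctr G (cm G u g))"

context group begin

lemma ctr_carrier: "ctr G u \<Longrightarrow> u \<in> carrier G" by (simp add: ctr_def)
lemma ctr_comm: "ctr G u \<Longrightarrow> g \<in> carrier G \<Longrightarrow> u \<otimes> g = g \<otimes> u" by (simp add: ctr_def)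
lemma ctr_one: "ctr G \<one>" by (simp add: ctr_def)

lemma comm_cube: assumes a: "a \<in> carrier G" and b: "b \<in> carrier G" and ba: "b \<otimes> a = a \<otimes> b"
  shows "(a \<otimes> b) \<otimes> ((a \<otimes> b) \<otimes> (a \<otimes> b)) = (a \<otimes> (a \<otimes> a)) \<otimes> (b \<otimes> (b \<otimes> b))"
proof -
  have ba2: "\<And>r. r \<in> carrier G \<Longrightarrow> b \<otimes> (a \<otimes> r) = a \<otimes> (b \<otimes> r)"
  proof -
    fix r assume r: "r \<in> carrier G"
    have "b \<otimes> (a \<otimes> r) = (b \<otimes> a) \<otimes> r" using r a b by (simp add: m_assoc)
    also have "\<dots> = a \<otimes> (b \<otimes> r)" using ba r a b by (simp add: m_assoc)
    finally show "b \<otimes> (a \<otimes> r) = a \<otimes> (b \<otimes> r)" .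
  qed
  show ?thesis using a b by (simp add: m_assoc ba ba2)
qed

lemma ctr_mult: assumes u: "ctr G u" and v: "ctr G v" shows "ctr G (u \<otimes> v)"
proof -
  have uc: "u \<in> carrier G" and vc: "v \<in> carrier G" using u v by (auto simp: ctr_def)
  have uC: "\<And>g. g \<in> carrier G \<Longrightarrow> u \<otimes> g = g \<otimes> u" using u unfolding ctr_def by blast
  have vC: "\<And>g. g \<in> carrier G \<Longrightarrow> v \<otimes> g = g \<otimes> v" using v unfolding ctr_def by blast
  have u3: "u \<otimes> (u \<otimes> u) = \<one>" using u unfolding ctr_def by blast
  have v3: "v \<otimes> (v \<otimes> v) = \<one>" using v unfolding ctr_def by blast
  have A: "\<forall>g\<in>carrier G. u \<otimes> v \<otimes> g = g \<otimes> (u \<otimes> v)"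
  proof
    fix g assume g: "g \<in> carrier G"
    have "u \<otimes> v \<otimes> g = u \<otimes> (v \<otimes> g)" using uc vc g by (simp add: m_assoc)
    also have "\<dots> = u \<otimes> (g \<otimes> v)" using vC[OF g] by simp
    also have "\<dots> = (u \<otimes> g) \<otimes> v" using uc vc g by (simp add: m_assoc)
    also have "\<dots> = (g \<otimes> u) \<otimes> v" using uC[OF g] by simp
    also have "\<dots> = g \<otimes> (u \<otimes> v)" using uc vc g by (simp add: m_assoc)
    finally show "u \<otimes> v \<otimes> g = g \<otimes> (u \<otimes> v)" .
  qed
  have "u \<otimes> v \<otimes> (u \<otimes> v \<otimes> (u \<otimes> v)) = (u \<otimes> (u \<otimes> u)) \<otimes> (v \<otimes> (v \<otimes> v))"
    using comm_cube[OF uc vc] vC[OF uc] by simp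
  also have "\<dots> = \<one>" using u3 v3 by simp
  finally have B: "u \<otimes> v \<otimes> (u \<otimes> v \<otimes> (u \<otimes> v)) = \<one>" .
  show ?thesis unfolding ctr_def using A B uc vc by blast
qed

lemma ctr_conj: assumes u: "ctr G u" and s: "s \<in> carrier G" shows "inv s \<otimes> u \<otimes> s = u"
proof -
  have uc: "u \<in> carrier G" using u by (simp add: ctr_def)
  have "inv s \<otimes> u \<otimes> s = inv s \<otimes> (u \<otimes> s)" using uc s by (simp add: m_assoc)
  also have "\<dots> = inv s \<otimes> (s \<otimes> u)" using ctr_comm[OF u s] by simp
  also have "\<dots> = u" using uc s by (simp add: gw2)
  finally show ?thesis .
qed

lemma inv_commute: assumes c: "c \<in> carrier G" and h: "h \<in> carrier G" and ch: "c \<otimes> h = h \<otimes> c"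
  shows "inv c \<otimes> h = h \<otimes> inv c"
proof -
  have "inv c \<otimes> h = inv c \<otimes> (h \<otimes> c) \<otimes> inv c" using c h by (simp add: m_assoc)
  also have "\<dots> = inv c \<otimes> (c \<otimes> h) \<otimes> inv c" using ch by simp
  also have "\<dots> = h \<otimes> inv c" using c h by (simp add: gw2 m_assoc[symmetric])
  finally show ?thesis .
qed

lemma ctr_cm: "ctr G u \<Longrightarrow> g \<in> carrier G \<Longrightarrow> cm G u g = \<one>"
  by (simp add: cm_one_iff ctr_carrier ctr_comm)

lemma ctr_isD: "ctr G u \<Longrightarrow> isD G u"
  by (simp add: isD_def ctr_carrier ctr_cm ctr_one)

lemma isD_carrier: "isD G u \<Longrightarrow> u \<in> carrier G" by (simp add: isD_def)

lemma cm_mult_left: "u \<in> carrier G \<Longrightarrow> v \<in> carrier G \<Longrightarrow> z \<in> carrier G \<Longrightarrow> ctr G (cm G u z) \<Longrightarrow>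
   cm G (u \<otimes> v) z = cm G u z \<otimes> cm G v z"
  using cm_left[of u v z] by (simp add: ctr_conj)

lemma isD_mult: assumes "isD G u" "isD G v" shows "isD G (u \<otimes> v)"
  using assms by (simp add: isD_def cm_mult_left ctr_mult)

lemma ctr_rearr: "ctr G a \<Longrightarrow> ctr G b \<Longrightarrow> ctr G c \<Longrightarrow> ctr G d \<Longrightarrow>
  (a \<otimes> b) \<otimes> (c \<otimes> d) = (a \<otimes> c) \<otimes> (b \<otimes> d)"
proof -
  assume a: "ctr G a" and b: "ctr G b" and c: "ctr G c" and d: "ctr G d"
  have ac: "a \<in> carrier G" "b \<in> carrier G" "c \<in> carrier G" "d \<in> carrier G"
    using a b c d by (auto simp: ctr_def)
  have bc: "b \<otimes> c = c \<otimes> b" using ctr_comm[OF b] ac by simp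
  have "(a \<otimes> b) \<otimes> (c \<otimes> d) = a \<otimes> ((b \<otimes> c) \<otimes> d)" using ac by (simp add: m_assoc)
  also have "\<dots> = a \<otimes> ((c \<otimes> b) \<otimes> d)" using bc by simp
  also have "\<dots> = (a \<otimes> c) \<otimes> (b \<otimes> d)" using ac by (simp add: m_assoc)
  finally show ?thesis .
qed

lemma cube_step: assumes x: "x \<in> carrier G" and y: "y \<in> carrier G"
  and dx: "cm G x y \<otimes> x = x \<otimes> cm G x y" and dy: "cm G x y \<otimes> y = y \<otimes> cm G x y"
  and x3: "x \<otimes> (x \<otimes> x) = \<one>" and y3: "y \<otimes> (y \<otimes> y) = \<one>"
  shows "(x \<otimes> y) \<otimes> ((x \<otimes> y) \<otimes> (x \<otimes> y)) = \<one>"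
proof -
  define d where "d = cm G x y"
  have d: "d \<in> carrier G" using x y d_def by simp
  define e where "e = inv d"
  have e: "e \<in> carrier G" using d e_def by simp
  have xd: "x \<otimes> d = inv y \<otimes> x \<otimes> y" using x y by (simp add: d_def cm_def gsimps)
  have "(x \<otimes> d) \<otimes> ((x \<otimes> d) \<otimes> (x \<otimes> d)) = inv y \<otimes> (x \<otimes> (x \<otimes> x)) \<otimes> y"
    unfolding xd using x y by (simp add: gsimps)
  also have "\<dots> = \<one>" using x3 y by simp
  finally have "(x \<otimes> d) \<otimes> ((x \<otimes> d) \<otimes> (x \<otimes> d)) = \<one>" .
  moreover have "(x \<otimes> d) \<otimes> ((x \<otimes> d) \<otimes> (x \<otimes> d)) = (x \<otimes> (x \<otimes> x)) \<otimes> (d \<otimes> (d \<otimes> d))"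
    using comm_cube[OF x d] dx d_def by simp
  ultimately have d3: "d \<otimes> (d \<otimes> d) = \<one>" using x3 d by simp
  have "inv (d \<otimes> (d \<otimes> d)) = e \<otimes> (e \<otimes> e)" using d by (simp add: e_def inv_mult_group m_assoc)
  hence e3: "e \<otimes> (e \<otimes> e) = \<one>" using d3 by simp
  have ex: "e \<otimes> x = x \<otimes> e" using inv_commute[OF d x] dx d_def e_def by simp
  have ey: "e \<otimes> y = y \<otimes> e" using inv_commute[OF d y] dy d_def e_def by simp
  have yx: "y \<otimes> x = x \<otimes> (y \<otimes> e)"
    using x y d by (simp add: e_def d_def cm_def gsimps)
  have yx': "\<And>r. r \<in> carrier G \<Longrightarrow> y \<otimes> (x \<otimes> r) = x \<otimes> (y \<otimes> (e \<otimes> r))"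
  proof -
    fix r assume r: "r \<in> carrier G"
    have "y \<otimes> (x \<otimes> r) = (y \<otimes> x) \<otimes> r" using r x y by (simp add: m_assoc)
    also have "\<dots> = x \<otimes> (y \<otimes> (e \<otimes> r))" using yx r x y e by (simp add: m_assoc)
    finally show "y \<otimes> (x \<otimes> r) = x \<otimes> (y \<otimes> (e \<otimes> r))" .
  qed
  have ex': "\<And>r. r \<in> carrier G \<Longrightarrow> e \<otimes> (x \<otimes> r) = x \<otimes> (e \<otimes> r)"
  proof -
    fix r assume r: "r \<in> carrier G"
    have "e \<otimes> (x \<otimes> r) = (e \<otimes> x) \<otimes> r" using r x e by (simp add: m_assoc)
    also have "\<dots> = x \<otimes> (e \<otimes> r)" using ex r x e by (simp add: m_assoc)
    finally show "e \<otimes> (x \<otimes> r) = x \<otimes> (e \<otimes> r)" .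
  qed
  have ey': "\<And>r. r \<in> carrier G \<Longrightarrow> e \<otimes> (y \<otimes> r) = y \<otimes> (e \<otimes> r)"
  proof -
    fix r assume r: "r \<in> carrier G"
    have "e \<otimes> (y \<otimes> r) = (e \<otimes> y) \<otimes> r" using r y e by (simp add: m_assoc)
    also have "\<dots> = y \<otimes> (e \<otimes> r)" using ey r y e by (simp add: m_assoc)
    finally show "e \<otimes> (y \<otimes> r) = y \<otimes> (e \<otimes> r)" .
  qed
  have "(x \<otimes> y) \<otimes> ((x \<otimes> y) \<otimes> (x \<otimes> y)) = x \<otimes> (x \<otimes> (x \<otimes> (y \<otimes> (y \<otimes> (y \<otimes> (e \<otimes> (e \<otimes> e)))))))"
    using x y e by (simp add: m_assoc yx' ex' ey' yx ex ey)
  also have "\<dots> = \<one>" using x y e x3 y3 e3 by (simp add: m_assoc[symmetric])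
  finally show ?thesis .
qed

end

locale gset = group G for G (structure) + fixes S
  assumes S_sub: "S \<subseteq> carrier G" and gen: "generate G S = carrier G"
  and Scube: "s \<in> S \<Longrightarrow> s \<otimes> (s \<otimes> s) = \<one>"
  and L1: "a \<in> S \<Longrightarrow> b \<in> S \<Longrightarrow> c \<in> S \<Longrightarrow> d \<in> S \<Longrightarrow> cm G (cm G (cm G a b) c) d = \<one>"
  and L2: "a \<in> S \<Longrightarrow> b \<in> S \<Longrightarrow> c \<in> S \<Longrightarrow> cm G (cm G a (b \<otimes> c)) (b \<otimes> c) = \<one>"
  and L2': "a \<in> S \<Longrightarrow> b \<in> S \<Longrightarrow> cm G (cm G a b) b = \<one>"
  and L3: "a \<in> S \<Longrightarrow> b \<in> S \<Longrightarrow> c \<in> S \<Longrightarrow>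
     cm G (cm G a b) c \<otimes> (cm G (cm G a b) c \<otimes> cm G (cm G a b) c) = \<one>"
begin

lemma Sc: "s \<in> S \<Longrightarrow> s \<in> carrier G" using S_sub by auto

lemma wordset_carrier: "g \<in> wordset G S \<Longrightarrow> g \<in> carrier G"
  by (induct rule: wordset.induct) (auto simp: Sc)

lemma wordset_mult: "k \<in> wordset G S \<Longrightarrow> h \<in> wordset G S \<Longrightarrow> h \<otimes> k \<in> wordset G S"
proof (induct rule: wordset.induct)
  case wone then show ?case using wordset_carrier by simp
next
  case (wstep k s)
  have "h \<otimes> (k \<otimes> s) = (h \<otimes> k) \<otimes> s"
    using wstep wordset_carrier Sc by (simp add: m_assoc)
  then show ?case using wstep by (simp add: wordset.wstep)
qed

lemma gen_sub: "g \<in> generate G S \<Longrightarrow> g \<in> wordset G S"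
proof (induct rule: generate.induct)
  case one then show ?case by (rule wone)
next
  case (incl h)
  have "\<one> \<otimes> h \<in> wordset G S" using incl by (simp add: wordset.wone wordset.wstep)
  then show ?case using incl Sc by simp
next
  case (inv h)
  have hc: "h \<in> carrier G" using inv Sc by simp
  have "(h \<otimes> h) \<otimes> h = \<one>" using Scube[OF inv] hc by (simp add: m_assoc)
  hence "inv h = h \<otimes> h" using hc by (intro inv_equality) auto
  moreover have "\<one> \<otimes> h \<otimes> h \<in> wordset G S" using inv by (simp add: wordset.wone wordset.wstep)
  ultimately show ?case using hc by simp
next
  case (eng h1 h2) then show ?case using wordset_mult by simp
qed

lemma word_induct[consumes 1, case_names one step]:
  assumes "g \<in> carrier G" "P \<one>" "\<And>h s. h \<in> carrier G \<Longrightarrow> P h \<Longrightarrow> s \<in> S \<Longrightarrow> P (h \<otimes> s)"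
  shows "P g"
proof -
  have "g \<in> wordset G S" using assms(1) gen gen_sub by auto
  then show ?thesis
    by (induct rule: wordset.induct) (auto intro: assms(2,3) wordset_carrier)
qed

lemma central_S: assumes u: "u \<in> carrier G" and su: "\<And>s. s \<in> S \<Longrightarrow> u \<otimes> s = s \<otimes> u"
  and g: "g \<in> carrier G" shows "u \<otimes> g = g \<otimes> u"
  using g
proof (induct rule: word_induct)
  case one then show ?case using u by simp
next
  case (step h s)
  have "u \<otimes> (h \<otimes> s) = (u \<otimes> h) \<otimes> s" using step(1,3) u Sc by (simp add: m_assoc)
  also have "\<dots> = (h \<otimes> u) \<otimes> s" using step(2) by simp
  also have "\<dots> = h \<otimes> (u \<otimes> s)" using step(1,3) u Sc by (simp add: m_assoc)
  also have "\<dots> = h \<otimes> s \<otimes> u" using step u Sc su by (simp add: m_assoc)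
  finally show ?case .
qed

lemma G2: assumes w: "w \<in> carrier G" and ws: "\<And>s. s \<in> S \<Longrightarrow> ctr G (cm G w s)"
  and g: "g \<in> carrier G" shows "ctr G (cm G w g)"
  using g
proof (induct rule: word_induct)
  case one then show ?case using w by (simp add: ctr_one)
next
  case (step h s)
  have "cm G w (h \<otimes> s) = cm G w s \<otimes> cm G w h"
    using cm_right[of w h s] step w Sc by (simp add: ctr_conj)
  then show ?case using step ws ctr_mult by simp
qed

lemma G3a: assumes a: "a \<in> S" and b: "b \<in> S" shows "isD G (cm G a b)"
proof -
  have "ctr G (cm G (cm G a b) s)" if s: "s \<in> S" for s
  proof -
    have "cm G (cm G a b) s \<otimes> g = g \<otimes> cm G (cm G a b) s" if g: "g \<in> carrier G" for g
      by (rule central_S) (use a b s g Sc L1 cm_one_iff in auto)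
    moreover have "cm G (cm G a b) s \<in> carrier G" using a b s Sc by simp
    ultimately show ?thesis using L3[OF a b s] unfolding ctr_def by blast
  qed
  then show ?thesis using G2 a b Sc by (simp add: isD_def)
qed

lemma G3b: assumes a: "a \<in> S" and g: "g \<in> carrier G" shows "isD G (cm G a g)"
  using g
proof (induct rule: word_induct)
  case one then show ?case using a Sc by (simp add: ctr_isD ctr_one)
next
  case (step h s)
  have ac: "a \<in> carrier G" using a Sc by simp
  have "cm G a (h \<otimes> s) = cm G a s \<otimes> (cm G a h \<otimes> cm G (cm G a h) s)"
    using cm_right[of a h s] conj_cm[of "cm G a h" s] step ac Sc by simp
  moreover have "ctr G (cm G (cm G a h) s)" using step Sc by (simp add: isD_def)
  ultimately show ?case using step G3a[OF a] isD_mult ctr_isD by simp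
qed

lemma G3c: assumes x: "x \<in> carrier G" shows "\<forall>g\<in>carrier G. isD G (cm G x g)"
  using x
proof (induct rule: word_induct)
  case one then show ?case by (simp add: ctr_isD ctr_one)
next
  case (step h s)
  show ?case
  proof
    fix g assume g: "g \<in> carrier G"
    have "cm G (h \<otimes> s) g = (cm G h g \<otimes> cm G (cm G h g) s) \<otimes> cm G s g"
      using cm_left[of h s g] conj_cm[of "cm G h g" s] step g Sc by simp
    moreover have "ctr G (cm G (cm G h g) s)" using step g Sc by (simp add: isD_def)
    ultimately show "isD G (cm G (h \<otimes> s) g)" using step g G3b isD_mult ctr_isD by simp
  qed
qed

lemma Tctr: "x \<in> carrier G \<Longrightarrow> y \<in> carrier G \<Longrightarrow> z \<in> carrier G \<Longrightarrow> ctr G (cm G (cm G x y) z)"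
  using G3c by (simp add: isD_def)

abbreviation T where "T x y z \<equiv> cm G (cm G x y) z"

lemma lin3: "x \<in> carrier G \<Longrightarrow> y \<in> carrier G \<Longrightarrow> z \<in> carrier G \<Longrightarrow> z' \<in> carrier G \<Longrightarrow>
  T x y (z \<otimes> z') = T x y z' \<otimes> T x y z"
  using cm_right[of "cm G x y" z z'] Tctr by (simp add: ctr_conj)

lemma lin2: assumes c: "x \<in> carrier G" "y \<in> carrier G" "y' \<in> carrier G" "z \<in> carrier G"
  shows "T x (y \<otimes> y') z = T x y' z \<otimes> T x y z"
proof -
  have e1: "cm G x (y \<otimes> y') = cm G x y' \<otimes> (cm G x y \<otimes> cm G (cm G x y) y')"
    using cm_right[of x y y'] conj_cm[of "cm G x y" y'] c by simp
  have "cm G (cm G x y \<otimes> cm G (cm G x y) y') z = T x y z \<otimes> cm G (cm G (cm G x y) y') z"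
    using c Tctr by (simp add: cm_mult_left)
  also have "\<dots> = T x y z" using c Tctr ctr_cm by simp
  finally have e2: "cm G (cm G x y \<otimes> cm G (cm G x y) y') z = T x y z" .
  show ?thesis unfolding e1 using c Tctr e2 by (simp add: cm_mult_left)
qed

lemma lin1: assumes c: "x \<in> carrier G" "x' \<in> carrier G" "y \<in> carrier G" "z \<in> carrier G"
  shows "T (x \<otimes> x') y z = T x y z \<otimes> T x' y z"
proof -
  have e1: "cm G (x \<otimes> x') y = (cm G x y \<otimes> cm G (cm G x y) x') \<otimes> cm G x' y"
    using cm_left[of x x' y] conj_cm[of "cm G x y" x'] c by simp
  have e2: "cm G (cm G x y \<otimes> cm G (cm G x y) x') z = T x y z"
    using c Tctr ctr_cm by (simp add: cm_mult_left)
  have "ctr G (cm G (cm G x y \<otimes> cm G (cm G x y) x') z)" using e2 c Tctr by simp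
  then show ?thesis unfolding e1 using c e2 by (simp add: cm_mult_left)
qed

lemma Pbase: assumes a: "a \<in> S" and b: "b \<in> S" and c: "c \<in> S"
  shows "T a b c \<otimes> T a c b = \<one>"
proof -
  have ac: "a \<in> carrier G" "b \<in> carrier G" "c \<in> carrier G" using a b c Sc by auto
  have "\<one> = T a (b \<otimes> c) (b \<otimes> c)" using L2[OF a b c] by simp
  also have "\<dots> = T a (b \<otimes> c) c \<otimes> T a (b \<otimes> c) b" using ac lin3 by simp
  also have "\<dots> = (T a c c \<otimes> T a b c) \<otimes> (T a c b \<otimes> T a b b)" using ac lin2 by simp
  also have "\<dots> = T a b c \<otimes> T a c b" using L2'[OF a c] L2'[OF a b] ac Tctr ctr_carrier by simp
  finally show ?thesis by simp
qed

lemma P1: assumes x: "x \<in> carrier G" and b: "b \<in> S" and c: "c \<in> S"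
  shows "T x b c \<otimes> T x c b = \<one>"
  using x
proof (induct rule: word_induct)
  case one then show ?case using b c Sc by simp
next
  case (step h s)
  have "T (h \<otimes> s) b c \<otimes> T (h \<otimes> s) c b = (T h b c \<otimes> T s b c) \<otimes> (T h c b \<otimes> T s c b)"
    using step b c Sc lin1 by simp
  also have "\<dots> = (T h b c \<otimes> T h c b) \<otimes> (T s b c \<otimes> T s c b)"
    using step b c Sc Tctr ctr_rearr by simp
  also have "\<dots> = \<one>" using step Pbase b c Sc by simp
  finally show ?case .
qed

lemma P2: assumes x: "x \<in> carrier G" and y: "y \<in> carrier G" and c: "c \<in> S"
  shows "T x y c \<otimes> T x c y = \<one>"
  using y
proof (induct rule: word_induct)
  case one then show ?case using x c Sc by simp
next
  case (step h s)
  have "T x (h \<otimes> s) c \<otimes> T x c (h \<otimes> s) = (T x s c \<otimes> T x h c) \<otimes> (T x c s \<otimes> T x c h)"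
    using step x c Sc lin2 lin3 by simp
  also have "\<dots> = (T x s c \<otimes> T x c s) \<otimes> (T x h c \<otimes> T x c h)"
    using step x c Sc Tctr ctr_rearr by simp
  also have "\<dots> = \<one>" using step P1 x c Sc by simp
  finally show ?case .
qed

lemma P3: assumes x: "x \<in> carrier G" and y: "y \<in> carrier G" and z: "z \<in> carrier G"
  shows "T x y z \<otimes> T x z y = \<one>"
  using z
proof (induct rule: word_induct)
  case one then show ?case using x y by simp
next
  case (step h s)
  have "T x y (h \<otimes> s) \<otimes> T x (h \<otimes> s) y = (T x y s \<otimes> T x y h) \<otimes> (T x s y \<otimes> T x h y)"
    using step x y Sc lin2 lin3 by simp
  also have "\<dots> = (T x y s \<otimes> T x s y) \<otimes> (T x y h \<otimes> T x h y)"
    using step x y Sc Tctr ctr_rearr by simp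
  also have "\<dots> = \<one>" using step P2 x y Sc by simp
  finally show ?case .
qed

lemma engel: assumes x: "x \<in> carrier G" and y: "y \<in> carrier G" shows "T x y y = \<one>"
proof -
  have c: "ctr G (T x y y)" using x y Tctr by simp
  have "T x y y \<otimes> T x y y = \<one>" using P3[OF x y y] .
  moreover have "T x y y \<otimes> (T x y y \<otimes> T x y y) = \<one>" using c unfolding ctr_def by blast
  ultimately show ?thesis using c ctr_carrier by simp
qed

lemma all_cube: assumes g: "g \<in> carrier G" shows "g \<otimes> (g \<otimes> g) = \<one>"
  using g
proof (induct rule: word_induct)
  case one then show ?case by simp
next
  case (step h s)
  have sc: "s \<in> carrier G" using step Sc by simp
  have dy: "cm G h s \<otimes> s = s \<otimes> cm G h s" using engel[of h s] step sc cm_one_iff by simp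
  have "cm G s h \<otimes> h = h \<otimes> cm G s h" using engel[of s h] step sc cm_one_iff by simp
  hence dx: "cm G h s \<otimes> h = h \<otimes> cm G h s" using step sc cm_swap[of h s]
    inv_commute[of "cm G s h" h] by simp
  show ?case using cube_step[OF step(1) sc dx dy step(2) Scube[OF step(3)]] .
qed

end

lemma card4_list: "card (set xs) \<le> length xs"
  by (rule card_length)

lemma cm_in: "subgroup H G \<Longrightarrow> a \<in> H \<Longrightarrow> b \<in> H \<Longrightarrow> cm G a b \<in> H"
  by (simp add: cm_def subgroup.m_closed subgroup.m_inv_closed)

lemma loc:
  assumes G: "group G" and T: "T \<subseteq> carrier G" and e: "exponent3 G (generate G T)"
  and x: "x \<in> generate G T" and y: "y \<in> generate G T" and z: "z \<in> generate G T" and w: "w \<in> generate G T"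
  shows "cm G (cm G (cm G x y) z) w = \<one>\<^bsub>G\<^esub>" "cm G (cm G x y) y = \<one>\<^bsub>G\<^esub>"
    "x \<otimes>\<^bsub>G\<^esub> (x \<otimes>\<^bsub>G\<^esub> x) = \<one>\<^bsub>G\<^esub>"
proof -
  interpret group G by (rule G)
  have sub: "subgroup (generate G T) G" by (rule generate_is_subgroup[OF T])
  define K where "K = G\<lparr>carrier := generate G T\<rparr>"
  have gK: "group K" unfolding K_def by (rule subgroup.subgroup_is_group[OF sub G])
  have cK: "h [^]\<^bsub>K\<^esub> (3::nat) = \<one>\<^bsub>K\<^esub>" if h: "h \<in> carrier K" for h
  proof -
    have "h \<in> generate G T" using h by (simp add: K_def)
    hence "h [^]\<^bsub>G\<^esub> (3::nat) = \<one>\<^bsub>G\<^esub>" using e by (simp add: exponent3_def)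
    thus ?thesis unfolding K_def using nat_pow_consistent by simp
  qed
  interpret K: exp3grp K by (rule exp3grp.intro[OF gK]) (rule exp3grp_axioms.intro, rule cK)
  have cmK: "cm K a b = cm G a b" if "a \<in> generate G T" "b \<in> generate G T" for a b
    using that sub by (simp add: cm_def K_def)
  have cK': "a \<in> carrier K" if "a \<in> generate G T" for a using that by (simp add: K_def)
  have xy: "cm G x y \<in> generate G T" using cm_in[OF sub x y] .
  have xyz: "cm G (cm G x y) z \<in> generate G T" using cm_in[OF sub xy z] .
  have "cm K (cm K (cm K x y) z) w = \<one>\<^bsub>K\<^esub>" using K.class3[OF cK'[OF x] cK'[OF y] cK'[OF z] cK'[OF w]] .
  thus "cm G (cm G (cm G x y) z) w = \<one>\<^bsub>G\<^esub>" using cmK x y z w xy xyz by (simp add: K_def)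
  have "cm K (cm K x y) y = \<one>\<^bsub>K\<^esub>" using K.engel2[OF cK'[OF x] cK'[OF y]] .
  thus "cm G (cm G x y) y = \<one>\<^bsub>G\<^esub>" using cmK x y xy by (simp add: K_def)
  have "x \<otimes>\<^bsub>K\<^esub> (x \<otimes>\<^bsub>K\<^esub> x) = \<one>\<^bsub>K\<^esub>" using K.cube3[OF cK'[OF x]] .
  thus "x \<otimes>\<^bsub>G\<^esub> (x \<otimes>\<^bsub>G\<^esub> x) = \<one>\<^bsub>G\<^esub>" by (simp add: K_def)
qed

theorem lemma6p5:
  fixes G (structure) and S :: "'a set"
  assumes "group G"
    and "S \<subseteq> carrier G"
    and "finite S"
    and "generate G S = carrier G"
    and "\<And>T. T \<subseteq> S \<Longrightarrow> card T \<le> 4 \<Longrightarrow> exponent3 G (generate G T)"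
  shows "exponent3 G (carrier G)"
proof -
  interpret group G by (rule assms(1))
  note hyp = assms(5)
  have gi: "\<And>a T. a \<in> T \<Longrightarrow> a \<in> generate G T" by (rule generate.incl)
  have TS: "\<And>xs. set xs \<subseteq> S \<Longrightarrow> length xs \<le> 4 \<Longrightarrow> exponent3 G (generate G (set xs))"
    using hyp card_length order_trans by blast
  have Tc: "\<And>xs. set xs \<subseteq> S \<Longrightarrow> set xs \<subseteq> carrier G" using assms(2) by blast
  have Scube: "s \<otimes> (s \<otimes> s) = \<one>" if s: "s \<in> S" for s
    using loc(3)[OF assms(1) Tc[of "[s]"] TS[of "[s]"], of s s s s] s by (simp add: gi)
  have L1: "cm G (cm G (cm G a b) c) d = \<one>" if "a \<in> S" "b \<in> S" "c \<in> S" "d \<in> S" for a b c d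
    using loc(1)[OF assms(1) Tc[of "[a,b,c,d]"] TS[of "[a,b,c,d]"], of a b c d] that by (simp add: gi)
  have L2: "cm G (cm G a (b \<otimes> c)) (b \<otimes> c) = \<one>" if "a \<in> S" "b \<in> S" "c \<in> S" for a b c
  proof -
    have sub: "subgroup (generate G (set [a,b,c])) G" using Tc[of "[a,b,c]"] that generate_is_subgroup by simp
    have "b \<otimes> c \<in> generate G (set [a,b,c])" using subgroup.m_closed[OF sub] by (simp add: gi)
    then show ?thesis
      using loc(2)[OF assms(1) Tc[of "[a,b,c]"] TS[of "[a,b,c]"], of a "b \<otimes> c" a a] that by (simp add: gi)
  qed
  have L2': "cm G (cm G a b) b = \<one>" if "a \<in> S" "b \<in> S" for a b
    using loc(2)[OF assms(1) Tc[of "[a,b]"] TS[of "[a,b]"], of a b a a] that by (simp add: gi)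
  have L3: "cm G (cm G a b) c \<otimes> (cm G (cm G a b) c \<otimes> cm G (cm G a b) c) = \<one>"
    if "a \<in> S" "b \<in> S" "c \<in> S" for a b c
  proof -
    have sub: "subgroup (generate G (set [a,b,c])) G" using Tc[of "[a,b,c]"] that generate_is_subgroup by simp
    have "cm G (cm G a b) c \<in> generate G (set [a,b,c])"
      using cm_in[OF sub] by (simp add: gi)
    then show ?thesis
      using loc(3)[OF assms(1) Tc[of "[a,b,c]"] TS[of "[a,b,c]"], of "cm G (cm G a b) c" a a a] that by (simp add: gi)
  qed
  interpret gset G S
    by (rule gset.intro[OF assms(1)], rule gset_axioms.intro)
       (use assms(2,4) Scube L1 L2 L2' L3 in auto)
  show ?thesis unfolding exponent3_def
  proof
    fix h assume h: "h \<in> carrier G"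
    have "h [^] (3::nat) = h \<otimes> (h \<otimes> h)" using h by (simp add: numeral_3_eq_3 m_assoc)
    then show "h [^] (3::nat) = \<one>" using all_cube[OF h] by simp
  qed
qed

end
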